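(* If $F(z,t)=\sum_{n\ge1}\sum_{m\ge0}a_{n,m}z^nt^m$ is very nice, then $\mathcal N F(z,t)$ is nice.
   Context: A bivariate series $F(z,t)$ is nice if $F(z,z^k)$ is a rational function of $z$ for every integer $k\ge0$; it is very nice if it is nice and $F(z,0)$ is also rational. For $G(z,t)=\sum_{n\ge1}\sum_{m\ge0}a_{n,m}z^nt^m$, $\mathcal N G(z,t)=G(z,0)+\sum_{n\ge1}\sum_{m\ge1}a_{n,m}\frac{1}{1-z^m}\cdot\frac{1-(tz)^m}{1-tz}z^n$. *)

theory Defs
  imports "HOL-Computational_Algebra.Computational_Algebra"
begin

text \<open>A bivariate series F(z,t) = sum a_{n,m} z^n t^m is represented as a formal power
series in z whose coefficients are polynomials in t:  a_{n,m} = coeff (F $ n) m.\<close>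

definition bcoeff :: "'a::zero poly fps \<Rightarrow> nat \<Rightarrow> nat \<Rightarrow> 'a" where
  "bcoeff F n m = coeff (F $ n) m"

definition rational_fps :: "'a::field fps \<Rightarrow> bool" where
  "rational_fps f \<longleftrightarrow> (\<exists>p q. coeff q 0 \<noteq> 0 \<and> f * fps_of_poly q = fps_of_poly p)"

text \<open>The substitution t := z^k, i.e. F(z, z^k).  (For k = 0 this is F(z,1).)\<close>
definition subst_tpow :: "'a::comm_ring_1 poly fps \<Rightarrow> nat \<Rightarrow> 'a fps" where
  "subst_tpow F k = Abs_fps (\<lambda>N. \<Sum>n\<le>N. \<Sum>m\<le>degree (F $ n).
       if n + k * m = N then bcoeff F n m else 0)"

definition subst_tzero :: "'a::comm_ring_1 poly fps \<Rightarrow> 'a fps" where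
  "subst_tzero F = Abs_fps (\<lambda>n. bcoeff F n 0)"

definition nice :: "'a::field poly fps \<Rightarrow> bool" where
  "nice F \<longleftrightarrow> (\<forall>k. rational_fps (subst_tpow F k))"

definition very_nice :: "'a::field poly fps \<Rightarrow> bool" where
  "very_nice F \<longleftrightarrow> nice F \<and> rational_fps (subst_tzero F)"

text \<open>The series 1/(1 - z^m) (for m \<ge> 1), with coefficients in 'a poly.\<close>
definition geom_fps :: "nat \<Rightarrow> 'a::comm_ring_1 poly fps" where
  "geom_fps m = Abs_fps (\<lambda>r. if m dvd r then 1 else 0)"

text \<open>The series  1/(1-z^m) * (1-(tz)^m)/(1-tz) * z^n  as a bivariate series.\<close>
definition N_term :: "nat \<Rightarrow> nat \<Rightarrow> 'a::comm_ring_1 poly fps" where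
  "N_term n m = geom_fps m * (\<Sum>i<m. (fps_const [:0, 1:] * fps_X) ^ i) * fps_X ^ n"

text \<open>The operator N:  N G(z,t) = G(z,0) + sum_{n\<ge>1, m\<ge>1} a_{n,m} N_term n m.
  Only finitely many terms contribute to each z-coefficient.\<close>
definition N_op :: "'a::comm_ring_1 poly fps \<Rightarrow> 'a poly fps" where
  "N_op G = Abs_fps (\<lambda>N. [:bcoeff G N 0:] +
      (\<Sum>n\<in>{1..N}. \<Sum>m\<in>{1..degree (G $ n)}. smult (bcoeff G n m) (N_term n m $ N)))"

end

theory Submission imports Defs begin

definition ev :: "nat \<Rightarrow> 'a::field poly \<Rightarrow> 'a poly" where
  "ev k p = pcompose p (monom 1 k)"

definition phi :: "nat \<Rightarrow> 'a::field poly fps \<Rightarrow> 'a fps" where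
  "phi k G = Abs_fps (\<lambda>N. \<Sum>n\<le>N. coeff (ev k (G $ n)) (N - n))"

lemma coeff_const: "coeff [:a:] r = (if r = 0 then a else 0)"
  by (cases r) auto

lemma coeff_pcompose_monom_gen:
  fixes p :: "'a::field poly"
  shows "degree p \<le> D \<Longrightarrow> coeff (pcompose p (monom 1 k)) r = (\<Sum>m\<le>D. if k * m = r then coeff p m else 0)"
proof (induction p arbitrary: D r rule: pCons_induct)
  case 0
  then show ?case by (auto intro!: sum.neutral)
next
  case (pCons a p)
  show ?case
  proof (cases D)
    case 0
    with pCons have "p = 0" by (auto split: if_splits)
    then show ?thesis using 0 by (simp add: coeff_const)
  next
    case (Suc D')
    have dp: "degree p \<le> D'" using pCons.prems Suc by (cases "p = 0") auto
    have "coeff (pcompose (pCons a p) (monom 1 k)) r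
        = (if r = 0 then a else 0) + (if k \<le> r then coeff (pcompose p (monom 1 k)) (r - k) else 0)"
      by (simp add: pcompose_pCons coeff_monom_mult coeff_const)
    also have "\<dots> = (if k * 0 = r then coeff (pCons a p) 0 else 0) +
        (\<Sum>m\<le>D'. if k * Suc m = r then coeff (pCons a p) (Suc m) else 0)"
    proof -
      have "(if k \<le> r then coeff (pcompose p (monom 1 k)) (r - k) else 0) =
          (\<Sum>m\<le>D'. if k * Suc m = r then coeff (pCons a p) (Suc m) else 0)"
      proof (cases "k \<le> r")
        case True
        have "coeff (pcompose p (monom 1 k)) (r - k) =
          (\<Sum>m\<le>D'. if k * Suc m = r then coeff (pCons a p) (Suc m) else 0)"
          unfolding pCons.IH[OF dp, of "r - k"]
          by (intro sum.cong refl) (use True in auto)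
        then show ?thesis using True by simp
      next
        case False
        then show ?thesis by (auto intro!: sum.neutral)
      qed
      then show ?thesis by simp
    qed
    also have "\<dots> = (\<Sum>m\<le>D. if k * m = r then coeff (pCons a p) m else 0)"
      unfolding Suc sum.atMost_Suc_shift by simp
    finally show ?thesis .
  qed
qed

lemma subst_tpow_phi: "subst_tpow G k = phi k G"
proof (rule fps_ext)
  fix N
  have "subst_tpow G k $ N = (\<Sum>n\<le>N. \<Sum>m\<le>degree (G $ n). if k * m = N - n then coeff (G $ n) m else 0)"
    unfolding subst_tpow_def bcoeff_def
    by (auto intro!: sum.cong)
  also have "\<dots> = phi k G $ N"
    unfolding phi_def ev_def by (simp add: coeff_pcompose_monom_gen[OF order.refl])
  finally show "subst_tpow G k $ N = phi k G $ N" .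
qed

lemma phi_local:
  assumes "\<And>i. i \<le> N \<Longrightarrow> A $ i = B $ i"
  shows "phi k A $ N = phi k B $ N"
  unfolding phi_def using assms by (auto intro!: sum.cong)

lemma phi_sum: "phi k (\<Sum>i\<in>S. f i) = (\<Sum>i\<in>S. phi k (f i))"
proof (rule fps_ext)
  fix N
  show "phi k (\<Sum>i\<in>S. f i) $ N = (\<Sum>i\<in>S. phi k (f i)) $ N"
    unfolding phi_def ev_def
    by (simp add: fps_sum_nth pcompose_sum coeff_sum sum.swap[of _ S])
qed

lemma phi_add: "phi k (A + B) = phi k A + phi k B"
  using phi_sum[of k "\<lambda>i. if i = (0::nat) then A else B" "{0,1}"] by simp

lemma phi_diff: "phi k (A - B) = phi k A - phi k B"
proof (rule fps_ext)
  fix N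
  show "phi k (A - B) $ N = (phi k A - phi k B) $ N"
    unfolding phi_def ev_def
    by (simp add: pcompose_diff sum_subtractf)
qed

lemma phi_const_mult: "phi k (fps_const [:b:] * A) = fps_const b * phi k A"
proof (rule fps_ext)
  fix N
  show "phi k (fps_const [:b:] * A) $ N = (fps_const b * phi k A) $ N"
    unfolding phi_def ev_def
    by (simp add: pcompose_smult sum_distrib_left)
qed

lemma fmonom_nth: "(fps_const p * fps_X ^ n) $ i = (if i = n then p else 0)"
  by simp

lemma phi_monom: "phi k (fps_const p * fps_X ^ n) = fps_of_poly (ev k p) * fps_X ^ n"
proof (rule fps_ext)
  fix N
  have "phi k (fps_const p * fps_X ^ n) $ N = (\<Sum>i\<le>N. if i = n then coeff (ev k p) (N - n) else 0)"
    unfolding phi_def ev_def fmonom_nth fps_nth_Abs_fps by (intro sum.cong refl) auto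
  also have "\<dots> = (if n \<le> N then coeff (ev k p) (N - n) else 0)"
    by (simp add: sum.delta)
  finally show "phi k (fps_const p * fps_X ^ n) $ N = (fps_of_poly (ev k p) * fps_X ^ n) $ N"
    by (simp add: fps_X_power_mult_right_nth)
qed

lemma cutoff_as_sum: "fps_cutoff M G = (\<Sum>n<M. fps_const (G $ n) * fps_X ^ n)"
proof (rule fps_ext)
  fix n
  have "(\<Sum>i<M. fps_const (G $ i) * fps_X ^ i) $ n = (\<Sum>i<M. if n = i then G $ i else 0)"
    unfolding fps_sum_nth fmonom_nth ..
  then show "fps_cutoff M G $ n = (\<Sum>n<M. fps_const (G $ n) * fps_X ^ n) $ n"
    by (simp add: sum.delta)
qed

lemma ev_mult: "ev k (p * q) = ev k p * ev k q"
  unfolding ev_def by (simp add: pcompose_mult)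

lemma phi_cutoff: "phi k (fps_cutoff M G) = (\<Sum>n<M. fps_of_poly (ev k (G $ n)) * fps_X ^ n)"
  unfolding cutoff_as_sum phi_sum phi_monom ..

lemma mult_local:
  assumes "\<And>i. i \<le> N \<Longrightarrow> A $ i = A' $ i" "\<And>i. i \<le> N \<Longrightarrow> B $ i = B' $ i"
  shows "(A * B) $ N = (A' * B') $ N"
  unfolding fps_mult_nth using assms by (auto intro!: sum.cong)

lemma phi_mult: "phi k (G * H) = phi k G * phi k H"
proof (rule fps_ext)
  fix N
  define M where "M = Suc N"
  have e1: "phi k (G * H) $ N = phi k (fps_cutoff M G * fps_cutoff M H) $ N"
    by (rule phi_local) (rule mult_local, auto simp: M_def)
  have e2: "fps_cutoff M G * fps_cutoff M H =
      (\<Sum>a<M. \<Sum>b<M. fps_const (G $ a * H $ b) * fps_X ^ (a + b))"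
    unfolding cutoff_as_sum sum_product
    by (intro sum.cong refl) (simp add: power_add mult_ac)
  have e3: "phi k (fps_cutoff M G * fps_cutoff M H) = (\<Sum>a<M. \<Sum>b<M. fps_of_poly (ev k (G $ a * H $ b)) * fps_X ^ (a + b))"
    unfolding e2 by (simp only: phi_sum phi_monom)
  have e4: "(\<Sum>a<M. \<Sum>b<M. fps_of_poly (ev k (G $ a * H $ b)) * fps_X ^ (a + b)) = phi k (fps_cutoff M G) * phi k (fps_cutoff M H)"
    unfolding phi_cutoff sum_product
    by (intro sum.cong refl) (simp add: ev_mult fps_of_poly_mult power_add mult_ac)
  have e5: "(phi k (fps_cutoff M G) * phi k (fps_cutoff M H)) $ N = (phi k G * phi k H) $ N"
    by (rule mult_local; rule phi_local; auto simp: M_def)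
  show "phi k (G * H) $ N = (phi k G * phi k H) $ N"
    using e1 e3 e4 e5 by simp
qed


definition geomA :: "nat \<Rightarrow> 'a::field fps" where
  "geomA m = Abs_fps (\<lambda>r. if m dvd r then 1 else 0)"

lemma ev_1: "ev k 1 = 1" unfolding ev_def by (simp add: pcompose_1)
lemma ev_0: "ev k 0 = 0" unfolding ev_def by simp

lemma phi_geom: "phi k (geom_fps m) = (geomA m :: 'a::field fps)"
proof (rule fps_ext)
  fix N
  have "phi k (geom_fps m :: 'a poly fps) $ N = (\<Sum>n\<le>N. if n = N then (if m dvd N then 1 else 0) else (0::'a))"
    unfolding phi_def geom_fps_def fps_nth_Abs_fps
    by (intro sum.cong refl) (auto simp: ev_1 ev_0 coeff_1)
  also have "\<dots> = geomA m $ N" by (simp add: geomA_def)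
  finally show "phi k (geom_fps m) $ N = (geomA m :: 'a fps) $ N" .
qed

lemma geomA_inv:
  assumes "0 < m"
  shows "geomA m * (1 - fps_X ^ m) = (1 :: 'a::field fps)"
proof (rule fps_ext)
  fix N
  have "(geomA m * (1 - fps_X ^ m) :: 'a fps) $ N = geomA m $ N - (geomA m * fps_X ^ m) $ N"
    by (simp add: algebra_simps)
  also have "\<dots> = (1 :: 'a fps) $ N"
  proof (cases "N = 0")
    case True
    then show ?thesis using assms by (simp add: geomA_def fps_X_power_mult_right_nth)
  next
    case False
    show ?thesis
    proof (cases "N < m")
      case True
      then have "\<not> m dvd N" using False by (auto dest: dvd_imp_le)
      then show ?thesis using True False by (simp add: geomA_def fps_X_power_mult_right_nth)
    next
      case nl: False
      then have "m dvd N \<longleftrightarrow> m dvd (N - m)"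
        by (metis dvd_minus_self not_less)
      then show ?thesis using nl False by (simp add: geomA_def fps_X_power_mult_right_nth)
    qed
  qed
  finally show "(geomA m * (1 - fps_X ^ m) :: 'a fps) $ N = (1 :: 'a fps) $ N" .
qed

lemma phi_const: "phi k (fps_const p) = fps_of_poly (ev k p)"
  using phi_monom[of k p 0] by simp

lemma phi_one: "phi k 1 = 1"
  using phi_const[of k 1] by (simp add: ev_1)

lemma phi_X: "phi k fps_X = fps_X"
  using phi_monom[of k 1 1] by (simp add: ev_1)

lemma phi_power: "phi k (A ^ i) = phi k A ^ i"
  by (induction i) (simp_all add: phi_one phi_mult)

lemma phi_tX: "phi k (fps_const [:0, 1:]) = (fps_X ^ k :: 'a::field fps)"
proof -
  have "ev k [:0, 1:] = (monom 1 k :: 'a poly)"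
    unfolding ev_def by (simp add: pcompose_pCons)
  then show ?thesis by (simp add: phi_const fps_of_poly_monom')
qed

lemma phi_Nterm: "phi k (N_term n m) = (geomA m * (\<Sum>i<m. (fps_X ^ k * fps_X) ^ i) * fps_X ^ n :: 'a::field fps)"
  unfolding N_term_def by (simp add: phi_mult phi_sum phi_power phi_tX phi_geom phi_X)

lemma key:
  assumes "0 < m"
  shows "(1 - fps_X ^ Suc k) * phi k (N_term n m) = (\<Sum>j<Suc k. fps_X ^ (j * m)) * (fps_X ^ n :: 'a::field fps)"
proof -
  have Y: "fps_X ^ k * fps_X = (fps_X ^ Suc k :: 'a fps)" by (simp add: mult.commute)
  have "(1 - fps_X ^ Suc k) * phi k (N_term n m) =
      geomA m * ((1 - fps_X ^ Suc k) * (\<Sum>i<m. (fps_X ^ Suc k) ^ i)) * (fps_X ^ n :: 'a fps)"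
    unfolding phi_Nterm Y by (simp add: algebra_simps)
  also have "(1 - fps_X ^ Suc k) * (\<Sum>i<m. (fps_X ^ Suc k) ^ i) = (1 - (fps_X ^ Suc k) ^ m :: 'a fps)"
    by (simp only: one_diff_power_eq)
  also have "(fps_X ^ Suc k) ^ m = ((fps_X ^ m) ^ Suc k :: 'a fps)"
    by (metis power_mult mult.commute)
  also have "1 - (fps_X ^ m) ^ Suc k = (1 - fps_X ^ m) * (\<Sum>j<Suc k. (fps_X ^ m) ^ j :: 'a fps)"
    by (rule one_diff_power_eq)
  also have "geomA m * ((1 - fps_X ^ m) * (\<Sum>j<Suc k. (fps_X ^ m) ^ j)) * fps_X ^ n
      = (geomA m * (1 - fps_X ^ m)) * (\<Sum>j<Suc k. (fps_X ^ m) ^ j) * (fps_X ^ n :: 'a fps)"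
    by (simp add: mult.assoc)
  also have "\<dots> = (\<Sum>j<Suc k. (fps_X ^ m) ^ j) * (fps_X ^ n :: 'a fps)"
    by (simp only: geomA_inv[OF assms] mult_1_left)
  also have "(\<Sum>j<Suc k. (fps_X ^ m) ^ j) = (\<Sum>j<Suc k. fps_X ^ (j * m) :: 'a fps)"
    by (intro sum.cong refl) (metis power_mult mult.commute)
  finally show ?thesis .
qed



definition Zt :: "'a::field poly fps \<Rightarrow> 'a poly fps" where
  "Zt F = Abs_fps (\<lambda>n. [:bcoeff F n 0:])"

lemma phi_Zt: "phi j (Zt F) = subst_tzero F"
proof (rule fps_ext)
  fix N
  have "phi j (Zt F) $ N = (\<Sum>n\<le>N. if n = N then bcoeff F N 0 else 0)"
    unfolding phi_def Zt_def fps_nth_Abs_fps ev_def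
    by (intro sum.cong refl) (auto simp: coeff_const)
  then show "phi j (Zt F) $ N = subst_tzero F $ N"
    by (simp add: subst_tzero_def)
qed

definition W :: "'a::field poly fps \<Rightarrow> nat \<Rightarrow> 'a poly fps" where
  "W F N = Zt F + (\<Sum>n\<in>{1..N}. \<Sum>m\<in>{1..degree (F $ n)}. fps_const [:bcoeff F n m:] * N_term n m)"

lemma Nterm_low: "i < n \<Longrightarrow> N_term n m $ i = 0"
  unfolding N_term_def by (simp add: fps_X_power_mult_right_nth)

lemma W_agree:
  assumes "i \<le> N"
  shows "N_op F $ i = W F N $ i"
proof -
  have "W F N $ i = [:bcoeff F i 0:] +
     (\<Sum>n\<in>{1..N}. \<Sum>m\<in>{1..degree (F $ n)}. smult (bcoeff F n m) (N_term n m $ i))"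
    unfolding W_def by (simp add: fps_sum_nth Zt_def)
  also have "(\<Sum>n\<in>{1..N}. \<Sum>m\<in>{1..degree (F $ n)}. smult (bcoeff F n m) (N_term n m $ i))
      = (\<Sum>n\<in>{1..i}. \<Sum>m\<in>{1..degree (F $ n)}. smult (bcoeff F n m) (N_term n m $ i))"
    by (rule sum.mono_neutral_right) (use assms in \<open>auto simp: Nterm_low\<close>)
  finally show ?thesis unfolding N_op_def by simp
qed

definition FN :: "'a::field poly fps \<Rightarrow> nat \<Rightarrow> 'a poly fps" where
  "FN F N = Zt F + (\<Sum>n\<in>{1..N}. \<Sum>m\<in>{1..degree (F $ n)}. fps_const (monom (bcoeff F n m) m) * fps_X ^ n)"

lemma poly_split0: "(p::'a::field poly) = [:coeff p 0:] + (\<Sum>m\<in>{1..degree p}. monom (coeff p m) m)"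
proof -
  have "p = (\<Sum>m\<le>degree p. monom (coeff p m) m)" by (simp add: poly_as_sum_of_monoms)
  also have "\<dots> = (\<Sum>m\<in>{0..degree p}. monom (coeff p m) m)" by (simp add: atMost_atLeast0)
  also have "\<dots> = monom (coeff p 0) 0 + (\<Sum>m\<in>{Suc 0..degree p}. monom (coeff p m) m)"
    by (rule sum.atLeast_Suc_atMost) simp
  finally show ?thesis by (simp add: monom_0)
qed

lemma sum_if_const: "(\<Sum>m\<in>S. if c then f m else 0) = (if c then sum f S else 0)"
  by auto

lemma F_agree:
  assumes "F $ 0 = 0" "i \<le> N"
  shows "F $ i = FN F N $ i"
proof -
  have "FN F N $ i = [:bcoeff F i 0:] +
     (\<Sum>n\<in>{1..N}. if i = n then (\<Sum>m\<in>{1..degree (F $ n)}. monom (bcoeff F n m) m) else 0)"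
    unfolding FN_def fps_add_nth fps_sum_nth fmonom_nth sum_if_const
    by (simp add: Zt_def)
  also have "\<dots> = F $ i"
  proof (cases "i = 0")
    case True
    then show ?thesis using assms by (simp add: bcoeff_def)
  next
    case False
    then have "i \<in> {1..N}" using assms by auto
    then show ?thesis
      using poly_split0[of "F $ i"] by (simp add: sum.delta' bcoeff_def)
  qed
  finally show ?thesis by simp
qed

lemma ev_pow: "ev j ([:0, 1:] ^ m) = (monom 1 (j * m) :: 'a::field poly)"
proof (induction m)
  case 0 then show ?case by (simp add: ev_1)
next
  case (Suc m)
  have "ev j [:0, 1:] = (monom 1 j :: 'a poly)" unfolding ev_def by (simp add: pcompose_pCons)
  have "ev j ([:0, 1:] ^ Suc m) = ev j [:0, 1:] * (ev j ([:0, 1:] ^ m) :: 'a poly)"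
    by (simp only: power_Suc ev_mult)
  then show ?case using Suc \<open>ev j [:0, 1:] = monom 1 j\<close> by (simp add: mult_monom)
qed

lemma ev_monom: "ev j (monom b m) = (monom b (j * m) :: 'a::field poly)"
proof -
  have "ev j (monom b m) = smult b (ev j ([:0, 1:] ^ m))"
    unfolding monom_altdef ev_def by (simp add: pcompose_smult)
  then show ?thesis by (simp add: ev_pow smult_monom)
qed


lemma phi_FN: "phi j (FN F N) = subst_tzero F +
   (\<Sum>n\<in>{1..N}. \<Sum>m\<in>{1..degree (F $ n)}. fps_const (bcoeff F n m) * (fps_X ^ (j * m) * fps_X ^ n))"
  unfolding FN_def phi_add phi_sum phi_Zt phi_monom ev_monom fps_of_poly_monom mult.assoc ..

lemma phi_W: "(1 - fps_X ^ Suc k) * phi k (W F N) = (1 - fps_X ^ Suc k) * subst_tzero F +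
   (\<Sum>n\<in>{1..N}. \<Sum>m\<in>{1..degree (F $ n)}. fps_const (bcoeff F n m) * ((\<Sum>j<Suc k. fps_X ^ (j * m)) * fps_X ^ n))"
proof -
  have h: "fps_const (bcoeff F n m) * ((1 - fps_X ^ Suc k) * phi k (N_term n m)) =
     fps_const (bcoeff F n m) * ((\<Sum>j<Suc k. fps_X ^ (j * m)) * fps_X ^ n)"
    if "m \<in> {1..degree (F $ n)}" for n m
  proof -
    have "0 < m" using that by auto
    show ?thesis by (simp only: key[OF \<open>0 < m\<close>])
  qed
  have "(1 - fps_X ^ Suc k) * phi k (W F N) = (1 - fps_X ^ Suc k) * subst_tzero F +
   (\<Sum>n\<in>{1..N}. \<Sum>m\<in>{1..degree (F $ n)}. fps_const (bcoeff F n m) * ((1 - fps_X ^ Suc k) * phi k (N_term n m)))"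
    unfolding W_def phi_add phi_sum phi_Zt phi_const_mult distrib_left sum_distrib_left mult.left_commute[of "1 - fps_X ^ Suc k"] ..
  also have "\<dots> = (1 - fps_X ^ Suc k) * subst_tzero F +
   (\<Sum>n\<in>{1..N}. \<Sum>m\<in>{1..degree (F $ n)}. fps_const (bcoeff F n m) * ((\<Sum>j<Suc k. fps_X ^ (j * m)) * fps_X ^ n))"
    by (intro arg_cong2[where f="(+)"] refl sum.cong h)
  finally show ?thesis .
qed

lemma identity_N: "(1 - fps_X ^ Suc k) * phi k (W F N) = (1 - fps_X ^ Suc k) * subst_tzero F +
   (\<Sum>j<Suc k. phi j (FN F N) - subst_tzero F)"
proof -
  have "(\<Sum>j<Suc k. phi j (FN F N) - subst_tzero F) =
     (\<Sum>j<Suc k. \<Sum>n\<in>{1..N}. \<Sum>m\<in>{1..degree (F $ n)}. fps_const (bcoeff F n m) * (fps_X ^ (j * m) * fps_X ^ n))"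
    by (simp only: phi_FN add_diff_cancel_left')
  also have "\<dots> = (\<Sum>n\<in>{1..N}. \<Sum>j<Suc k. \<Sum>m\<in>{1..degree (F $ n)}. fps_const (bcoeff F n m) * (fps_X ^ (j * m) * fps_X ^ n))"
    by (rule sum.swap)
  also have "\<dots> = (\<Sum>n\<in>{1..N}. \<Sum>m\<in>{1..degree (F $ n)}. \<Sum>j<Suc k. fps_const (bcoeff F n m) * (fps_X ^ (j * m) * fps_X ^ n))"
    by (intro sum.cong refl sum.swap)
  also have "\<dots> = (\<Sum>n\<in>{1..N}. \<Sum>m\<in>{1..degree (F $ n)}. fps_const (bcoeff F n m) * ((\<Sum>j<Suc k. fps_X ^ (j * m)) * fps_X ^ n))"
    unfolding sum_distrib_left sum_distrib_right ..
  finally have c: "(\<Sum>j<Suc k. phi j (FN F N) - subst_tzero F) = (\<Sum>n\<in>{1..N}. \<Sum>m\<in>{1..degree (F $ n)}. fps_const (bcoeff F n m) * ((\<Sum>j<Suc k. fps_X ^ (j * m)) * fps_X ^ n))" .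
  show ?thesis unfolding phi_W c ..
qed

lemma rat_add: "rational_fps f \<Longrightarrow> rational_fps g \<Longrightarrow> rational_fps (f + g)"
proof -
  assume "rational_fps f" "rational_fps g"
  then obtain p1 q1 p2 q2 where 1: "coeff q1 0 \<noteq> 0" "f * fps_of_poly q1 = fps_of_poly p1"
    and 2: "coeff q2 0 \<noteq> 0" "g * fps_of_poly q2 = fps_of_poly p2"
    unfolding rational_fps_def by blast
  have "(f + g) * fps_of_poly (q1 * q2) = fps_of_poly (p1 * q2 + p2 * q1)"
    using 1 2 by (simp add: fps_of_poly_mult fps_of_poly_add algebra_simps)
  moreover have "coeff (q1 * q2) 0 \<noteq> 0" using 1(1) 2(1) by (simp add: coeff_mult_0)
  ultimately show ?thesis unfolding rational_fps_def by blast
qed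

lemma rat_uminus: "rational_fps f \<Longrightarrow> rational_fps (- f)"
proof -
  assume "rational_fps f"
  then obtain p q where 1: "coeff q 0 \<noteq> 0" "f * fps_of_poly q = fps_of_poly p"
    unfolding rational_fps_def by blast
  have "(- f) * fps_of_poly q = fps_of_poly (- p)"
    using 1 by (simp add: fps_of_poly_uminus)
  then show ?thesis using 1 unfolding rational_fps_def by blast
qed

lemma rat_diff: "rational_fps f \<Longrightarrow> rational_fps g \<Longrightarrow> rational_fps (f - g)"
  using rat_add[of f "- g"] rat_uminus[of g] by simp

lemma rat_mult_poly: "rational_fps f \<Longrightarrow> rational_fps (fps_of_poly a * f)"
proof -
  assume "rational_fps f"
  then obtain p q where 1: "coeff q 0 \<noteq> 0" "f * fps_of_poly q = fps_of_poly p"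
    unfolding rational_fps_def by blast
  have "(fps_of_poly a * f) * fps_of_poly q = fps_of_poly (a * p)"
    using 1 by (simp add: fps_of_poly_mult mult.assoc)
  then show ?thesis using 1 unfolding rational_fps_def by blast
qed

lemma rat_zero: "rational_fps 0"
  unfolding rational_fps_def by (rule exI[of _ 0], rule exI[of _ 1]) simp

lemma rat_sum: "(\<And>j. j \<in> S \<Longrightarrow> rational_fps (f j)) \<Longrightarrow> rational_fps (\<Sum>j\<in>S. f j)"
proof (induction S rule: infinite_finite_induct)
  case (infinite A)
  then show ?case by (simp add: rat_zero)
next
  case empty
  then show ?case by (simp add: rat_zero)
next
  case (insert x F)
  then show ?case by (simp add: rat_add)
qed

lemma rat_cancel:
  assumes "rational_fps (fps_of_poly a * g)" "coeff a 0 \<noteq> 0"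
  shows "rational_fps g"
proof -
  obtain p q where 1: "coeff q 0 \<noteq> 0" "fps_of_poly a * g * fps_of_poly q = fps_of_poly p"
    using assms unfolding rational_fps_def by blast
  have "g * fps_of_poly (a * q) = fps_of_poly p" using 1 by (simp add: fps_of_poly_mult mult_ac)
  moreover have "coeff (a * q) 0 \<noteq> 0" using 1(1) assms(2) by (simp add: coeff_mult_0)
  ultimately show ?thesis unfolding rational_fps_def by blast
qed

theorem mainTheorem6:
  fixes F :: "'a::field poly fps"
  assumes "F $ 0 = 0"
    and "very_nice F"
  shows "nice (N_op F)"
  unfolding nice_def
proof
  fix k
  have Z: "rational_fps (subst_tzero F)" and P: "\<And>j. rational_fps (phi j F)"
    using assms(2) unfolding very_nice_def nice_def subst_tpow_phi by auto
  define R where "R = (1 - fps_X ^ Suc k) * subst_tzero F + (\<Sum>j<Suc k. phi j F - subst_tzero F)"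
  define a :: "'a poly" where "a = 1 - monom 1 (Suc k)"
  have fa: "fps_of_poly a = 1 - fps_X ^ Suc k"
    unfolding a_def by (simp add: fps_of_poly_diff fps_of_poly_monom')
  have a0: "coeff a 0 \<noteq> 0" unfolding a_def by simp
  have eq: "(1 - fps_X ^ Suc k) * phi k (N_op F) = R"
  proof (rule fps_ext)
    fix N
    have "((1 - fps_X ^ Suc k) * phi k (N_op F)) $ N = ((1 - fps_X ^ Suc k) * phi k (W F N)) $ N"
      by (rule mult_local) (auto intro!: phi_local W_agree)
    also have "\<dots> = ((1 - fps_X ^ Suc k) * subst_tzero F + (\<Sum>j<Suc k. phi j (FN F N) - subst_tzero F)) $ N"
      unfolding identity_N ..
    also have "\<dots> = R $ N"
    proof -
      have "\<And>j. phi j (FN F N) $ N = phi j F $ N"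
        by (rule phi_local) (rule F_agree[OF assms(1), symmetric])
      then show ?thesis unfolding R_def fps_add_nth fps_sum_nth fps_sub_nth by (simp only:)
    qed
    finally show "((1 - fps_X ^ Suc k) * phi k (N_op F)) $ N = R $ N" .
  qed
  have "rational_fps R"
    unfolding R_def
    by (intro rat_add rat_sum rat_diff P Z) (simp only: fa[symmetric] rat_mult_poly Z)
  moreover have "fps_of_poly a * phi k (N_op F) = R" using eq unfolding fa .
  ultimately have "rational_fps (fps_of_poly a * phi k (N_op F))" by simp
  then have "rational_fps (phi k (N_op F))" using rat_cancel a0 by blast
  then show "rational_fps (subst_tpow (N_op F) k)" by (simp add: subst_tpow_phi)
qed

end
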